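(* Let $T\ge 2$ be an integer and $n=T^2$. Consider the family of Adaptive Sampling for Discovery (ASD) problems with unlabeled set $S^n=[n]=\{1,\dots,n\}$, parameter $\theta\in[0,1]^n$, and label distribution $\mathcal{D}_{\theta\mid x}=\mathcal{N}(\theta_x,1)$ for $x\in[n]$ (so $f_\theta(x)=\theta_x$). For any algorithm $\mathcal{A}$ there exists a prior distribution on $\theta\in[0,1]^n$ (i.e. over this family of ASD problems) such that $\mathcal{BR}(T,\mathcal{A})\ge cT$, where $c>0$ is a universal constant.
   Context: Adaptive Sampling for Discovery (ASD): an unknown parameter $\theta$ is drawn from a prior; given input $x$ the label is drawn from $\mathcal{D}_{\theta\mid x}$, and $f_\theta(x)=\mathbb{E}_{Y\sim\mathcal{D}_{\theta\mid x}}[Y]$. Starting from a finite unlabeled set $S^n$, at each step $t=1,\dots,T$ an algorithm chooses (possibly at random, based on the history $\mathcal{F}_t=\{(X_i,Y_i)\}_{i<t}$) a point $X_t\in S^n_t:=S^n\setminus\{X_1,\dots,X_{t-1}\}$ and observes $Y_t\sim\mathcal{D}_{\theta\mid X_t}$; each point can be labeled at most once. The regret is $R_T=\max_{x_1,\dots,x_T\in S^n \text{ distinct}}\sum_{t=1}^T f_\theta(x_t)-\sum_{t=1}^T f_\theta(X_t)$, and the Bayesian regret is $\mathcal{BR}(T,\mathcal{A})=\mathbb{E}[R_T]$, the expectation being over the prior on $\theta$, the labels, and the algorithm's randomness. *)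

theory Defs
  imports "HOL-Probability.Probability"
begin

text \<open>ASD instance: unlabeled set {1..n}, parameter theta :: nat => real (extensional on {1..n}),
  labels Y = theta x + noise with standard Gaussian noise.\<close>

definition std_normal :: "real measure" where
  "std_normal = density lborel std_normal_density"

definition param_space :: "nat \<Rightarrow> (nat \<Rightarrow> real) measure" where
  "param_space n = PiM {1..n} (\<lambda>_. borel)"

text \<open>Label noise: one independent N(0,1) variable per point (each point is labeled at most once).\<close>
definition noise_space :: "nat \<Rightarrow> (nat \<Rightarrow> real) measure" where
  "noise_space n = PiM {1..n} (\<lambda>_. std_normal)"

text \<open>An algorithm with internal random seed w :: real: at step t (0-based) it chooses
  pol t w h, where h i = (X_(i+1), Y_(i+1)) for i < t is the history so far.\<close>
type_synonym asd_alg = "nat \<Rightarrow> real \<Rightarrow> (nat \<Rightarrow> nat \<times> real) \<Rightarrow> nat"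

definition hist_space :: "nat \<Rightarrow> (nat \<Rightarrow> nat \<times> real) measure" where
  "hist_space t = PiM {..<t} (\<lambda>_. count_space UNIV \<Otimes>\<^sub>M borel)"

definition valid_alg :: "nat \<Rightarrow> nat \<Rightarrow> real measure \<Rightarrow> asd_alg \<Rightarrow> bool" where
  "valid_alg n T P pol \<longleftrightarrow>
     (\<forall>t<T. (\<lambda>(w, h). pol t w h) \<in> measurable (P \<Otimes>\<^sub>M hist_space t) (count_space UNIV)) \<and>
     (\<forall>t<T. \<forall>w h. (\<forall>i<t. fst (h i) \<in> {1..n}) \<and> inj_on (fst \<circ> h) {..<t} \<longrightarrow>
         pol t w h \<in> {1..n} \<and> pol t w h \<notin> (fst \<circ> h) ` {..<t})"

primrec asd_hist :: "asd_alg \<Rightarrow> real \<Rightarrow> (nat \<Rightarrow> real) \<Rightarrow> (nat \<Rightarrow> real) \<Rightarrow> nat \<Rightarrow> (nat \<Rightarrow> nat \<times> real)" where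
  "asd_hist pol w \<theta> z 0 = (\<lambda>_. undefined)"
| "asd_hist pol w \<theta> z (Suc t) =
     (let h = asd_hist pol w \<theta> z t; x = pol t w h in h(t := (x, \<theta> x + z x)))"

definition opt_value :: "nat \<Rightarrow> nat \<Rightarrow> (nat \<Rightarrow> real) \<Rightarrow> real" where
  "opt_value n T \<theta> = Max ((\<lambda>S. \<Sum>x\<in>S. \<theta> x) ` {S. S \<subseteq> {1..n} \<and> card S = T})"

definition regret :: "nat \<Rightarrow> nat \<Rightarrow> asd_alg \<Rightarrow> real \<Rightarrow> (nat \<Rightarrow> real) \<Rightarrow> (nat \<Rightarrow> real) \<Rightarrow> real" where
  "regret n T pol w \<theta> z =
     opt_value n T \<theta> - (\<Sum>t<T. \<theta> (fst (asd_hist pol w \<theta> z T t)))"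

definition bayes_regret :: "nat \<Rightarrow> nat \<Rightarrow> (nat \<Rightarrow> real) measure \<Rightarrow> real measure \<Rightarrow> asd_alg \<Rightarrow> real" where
  "bayes_regret n T Q P pol =
     (\<integral>\<omega>. (case \<omega> of (\<theta>, z, w) \<Rightarrow> regret n T pol w \<theta> z) \<partial>(Q \<Otimes>\<^sub>M (noise_space n \<Otimes>\<^sub>M P)))"

end

theory Submission
  imports Defs
begin


definition Th :: "nat \<Rightarrow> (nat \<Rightarrow> real) set" where
  "Th n = PiE {1..n} (\<lambda>_. {0,1})"

definition flipc :: "(nat \<Rightarrow> real) \<Rightarrow> nat \<Rightarrow> (nat \<Rightarrow> real)" where
  "flipc \<theta> a = \<theta>(a := 1 - \<theta> a)"

lemma flipc_Th: "a \<in> {1..n} \<Longrightarrow> \<theta> \<in> Th n \<Longrightarrow> flipc \<theta> a \<in> Th n"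
  by (auto simp: Th_def flipc_def PiE_iff extensional_def)

lemma flipc_flipc[simp]: "flipc (flipc \<theta> a) a = \<theta>"
  by (auto simp: flipc_def)

lemma flipc_at[simp]: "flipc \<theta> a a = 1 - \<theta> a"
  by (simp add: flipc_def)

lemma Th_val: "\<theta> \<in> Th n \<Longrightarrow> x \<in> {1..n} \<Longrightarrow> \<theta> x = 0 \<or> \<theta> x = 1"
  by (auto simp: Th_def PiE_iff)

lemma finite_Th: "finite (Th n)"
  by (auto simp: Th_def intro!: finite_PiE)

lemma Th_ne: "Th n \<noteq> {}"
  by (auto simp: Th_def PiE_eq_empty_iff)

lemma sum_invol:
  assumes "\<And>x. x \<in> A \<Longrightarrow> f x \<in> A" "\<And>x. x \<in> A \<Longrightarrow> f (f x) = x"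
  shows "(\<Sum>x\<in>A. g (f x)) = (\<Sum>x\<in>A. (g x :: real))"
proof -
  have "bij_betw f A A"
    by (rule bij_betw_byWitness[where f'=f]) (use assms in auto)
  then show ?thesis by (rule sum.reindex_bij_betw)
qed

lemma sum_coord:
  assumes "b \<in> {1..n}"
  shows "(\<Sum>\<theta>\<in>Th n. \<theta> b) = real (card (Th n)) / 2"
proof -
  have "(\<Sum>\<theta>\<in>Th n. \<theta> b) = (\<Sum>\<theta>\<in>Th n. flipc \<theta> b b)"
    using sum_invol[of "Th n" "\<lambda>\<theta>. flipc \<theta> b" "\<lambda>\<theta>. \<theta> b"] flipc_Th[OF assms] by simp
  also have "\<dots> = (\<Sum>\<theta>\<in>Th n. 1 - \<theta> b)" by simp
  also have "\<dots> = real (card (Th n)) - (\<Sum>\<theta>\<in>Th n. \<theta> b)"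
    by (simp add: sum_subtractf)
  finally show ?thesis by simp
qed

lemma sum_max:
  assumes "a \<in> {1..n}" "b \<in> {1..n}" "a \<noteq> b"
  shows "(\<Sum>\<theta>\<in>Th n. max (\<theta> a) (\<theta> b)) = 3 * real (card (Th n)) / 4"
proof -
  have "(\<Sum>\<theta>\<in>Th n. max (\<theta> a) (\<theta> b)) = (\<Sum>\<theta>\<in>Th n. max (flipc \<theta> a a) (flipc \<theta> a b))"
    using sum_invol[of "Th n" "\<lambda>\<theta>. flipc \<theta> a" "\<lambda>\<theta>. max (\<theta> a) (\<theta> b)"] flipc_Th[OF assms(1)] by simp
  also have "\<dots> = (\<Sum>\<theta>\<in>Th n. max (1 - \<theta> a) (\<theta> b))"
    using assms(3) by (simp add: flipc_def)
  finally have e: "(\<Sum>\<theta>\<in>Th n. max (\<theta> a) (\<theta> b)) = (\<Sum>\<theta>\<in>Th n. max (1 - \<theta> a) (\<theta> b))" .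
  have "(\<Sum>\<theta>\<in>Th n. max (\<theta> a) (\<theta> b)) + (\<Sum>\<theta>\<in>Th n. max (1 - \<theta> a) (\<theta> b))
      = (\<Sum>\<theta>\<in>Th n. 1 + \<theta> b)"
    unfolding sum.distrib[symmetric]
  proof (rule sum.cong)
    fix \<theta> assume "\<theta> \<in> Th n"
    then show "max (\<theta> a) (\<theta> b) + max (1 - \<theta> a) (\<theta> b) = 1 + \<theta> b"
      using Th_val[of \<theta> n a] Th_val[of \<theta> n b] assms by auto
  qed simp
  also have "\<dots> = real (card (Th n)) + real (card (Th n)) / 2"
    by (simp add: sum.distrib sum_coord[OF assms(2)])
  finally show ?thesis using e by simp
qed

lemma hist_stable: "i < s \<Longrightarrow> s \<le> t \<Longrightarrow> asd_hist pol w \<theta> z t i = asd_hist pol w \<theta> z s i"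
proof (induction t)
  case 0 then show ?case by simp
next
  case (Suc t)
  show ?case
  proof (cases "s = Suc t")
    case False
    then have "s \<le> t" using Suc by simp
    then show ?thesis using Suc by (simp add: Let_def)
  qed simp
qed

lemma hist_last: "asd_hist pol w \<theta> z (Suc t) t = (pol t w (asd_hist pol w \<theta> z t), \<theta> (pol t w (asd_hist pol w \<theta> z t)) + z (pol t w (asd_hist pol w \<theta> z t)))"
  by (simp add: Let_def)

lemma fst_final: "t < T \<Longrightarrow> fst (asd_hist pol w \<theta> z T t) = pol t w (asd_hist pol w \<theta> z t)"
  using hist_stable[of t "Suc t" T pol w \<theta> z] hist_last[of pol w \<theta> z t] by simp

lemma hist_valid:
  assumes v: "valid_alg n T P pol"
  shows "t \<le> T \<Longrightarrow> (\<forall>i<t. fst (asd_hist pol w \<theta> z t i) \<in> {1..n}) \<and> inj_on (fst \<circ> asd_hist pol w \<theta> z t) {..<t}"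
proof (induction t)
  case 0 then show ?case by simp
next
  case (Suc t)
  let ?h = "asd_hist pol w \<theta> z t"
  let ?x = "pol t w ?h"
  have IH: "(\<forall>i<t. fst (?h i) \<in> {1..n}) \<and> inj_on (fst \<circ> ?h) {..<t}" using Suc by (simp add: comp_def)
  have tT: "t < T" using Suc by simp
  have x: "?x \<in> {1..n}" "?x \<notin> (fst \<circ> ?h) ` {..<t}"
    using v tT IH unfolding valid_alg_def by blast+
  have eq: "asd_hist pol w \<theta> z (Suc t) = ?h(t := (?x, \<theta> ?x + z ?x))" by (simp add: Let_def)
  have "inj_on (fst \<circ> asd_hist pol w \<theta> z (Suc t)) {..<t}"
    by (rule inj_on_cong[THEN iffD1, OF _ IH[THEN conjunct2]]) (simp add: Let_def)
  moreover have "{..<Suc t} = insert t {..<t}" by auto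
  ultimately have "inj_on (fst \<circ> asd_hist pol w \<theta> z (Suc t)) {..<Suc t}"
    using x(2) unfolding eq by (auto simp: inj_on_def image_iff) (metis lessThan_iff)
  moreover have "\<forall>i<Suc t. fst (asd_hist pol w \<theta> z (Suc t) i) \<in> {1..n}"
    using IH x(1) unfolding eq by (auto simp: less_Suc_eq)
  ultimately show ?case by blast
qed

lemma choice_valid:
  assumes v: "valid_alg n T P pol" and tT: "t < T"
  shows "pol t w (asd_hist pol w \<theta> z t) \<in> {1..n}"
    "pol t w (asd_hist pol w \<theta> z t) \<notin> (fst \<circ> asd_hist pol w \<theta> z t) ` {..<t}"
  using hist_valid[OF v, of t w \<theta> z] tT v unfolding valid_alg_def by auto

lemma flip_hist:
  assumes v: "valid_alg n T P pol" and tT: "t < T"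
    and a: "a = pol t w (asd_hist pol w \<theta> z t)"
  shows "s \<le> t \<Longrightarrow> asd_hist pol w (flipc \<theta> a) z s = asd_hist pol w \<theta> z s"
proof (induction s)
  case 0 then show ?case by simp
next
  case (Suc s)
  let ?x = "pol s w (asd_hist pol w \<theta> z s)"
  have "?x = fst (asd_hist pol w \<theta> z t s)"
    using hist_stable[of s "Suc s" t pol w \<theta> z] hist_last[of pol w \<theta> z s] Suc by simp
  moreover have "s < t" using Suc by simp
  then have "fst (asd_hist pol w \<theta> z t s) \<in> (fst \<circ> asd_hist pol w \<theta> z t) ` {..<t}" by auto
  ultimately have "?x \<noteq> a" using choice_valid(2)[OF v tT, of w \<theta> z] a by auto
  then show ?case using Suc by (simp add: Let_def flipc_def)
qed

lemma sum_found:
  assumes v: "valid_alg n T P pol" and tT: "t < T"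
  shows "(\<Sum>\<theta>\<in>Th n. \<theta> (pol t w (asd_hist pol w \<theta> z t))) = real (card (Th n)) / 2"
proof -
  define X where "X \<theta> = pol t w (asd_hist pol w \<theta> z t)" for \<theta>
  define \<sigma> where "\<sigma> \<theta> = flipc \<theta> (X \<theta>)" for \<theta>
  have XX: "X (\<sigma> \<theta>) = X \<theta>" for \<theta>
    unfolding X_def \<sigma>_def using flip_hist[OF v tT refl, where s=t] by (simp add: X_def)
  have XS: "X \<theta> \<in> {1..n}" for \<theta> unfolding X_def using choice_valid(1)[OF v tT] .
  have "(\<Sum>\<theta>\<in>Th n. \<theta> (X \<theta>)) = (\<Sum>\<theta>\<in>Th n. \<sigma> \<theta> (X (\<sigma> \<theta>)))"
    by (rule sum_invol[symmetric]) (auto simp: \<sigma>_def XX[unfolded \<sigma>_def] intro: flipc_Th XS)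
  also have "\<dots> = (\<Sum>\<theta>\<in>Th n. 1 - \<theta> (X \<theta>))" by (simp add: XX[unfolded \<sigma>_def] \<sigma>_def)
  also have "\<dots> = real (card (Th n)) - (\<Sum>\<theta>\<in>Th n. \<theta> (X \<theta>))"
    by (simp add: sum_subtractf)
  finally show ?thesis unfolding X_def by simp
qed


lemma finite_subsets_T: "finite {S. S \<subseteq> {1..(n::nat)} \<and> card S = T}"
  by (rule finite_subset[of _ "Pow {1..n}"]) auto

lemma opt_ge:
  assumes "S \<subseteq> {1..n}" "card S = T"
  shows "(\<Sum>x\<in>S. \<theta> x) \<le> opt_value n T \<theta>"
  unfolding opt_value_def
  by (rule Max_ge) (use assms finite_subsets_T in auto)

lemma opt_lower:
  assumes "2 * T \<le> n"
  shows "(\<Sum>i<T. max (\<theta> (2*i+1)) (\<theta> (2*i+2))) \<le> opt_value n T \<theta>"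
proof -
  define pk where "pk i = (if \<theta> (2*i+2) \<le> \<theta> (2*i+1) then 2*i+1 else 2*i+2)" for i
  have inj: "inj_on pk {..<T}"
    by (auto simp: inj_on_def pk_def split: if_splits)
  have sub: "pk ` {..<T} \<subseteq> {1..n}" using assms by (auto simp: pk_def)
  have "(\<Sum>i<T. max (\<theta> (2*i+1)) (\<theta> (2*i+2))) = (\<Sum>i<T. \<theta> (pk i))"
    by (rule sum.cong) (auto simp: pk_def max_def)
  also have "\<dots> = (\<Sum>x\<in>pk ` {..<T}. \<theta> x)" by (simp add: sum.reindex[OF inj])
  also have "\<dots> \<le> opt_value n T \<theta>"
    by (rule opt_ge[OF sub]) (simp add: card_image[OF inj])
  finally show ?thesis .
qed

lemma opt_bounds:
  assumes "T \<le> n" "\<forall>x\<in>{1..n}. \<theta> x \<in> {0..1}"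
  shows "0 \<le> opt_value n T \<theta>" "opt_value n T \<theta> \<le> T"
proof -
  have "(\<Sum>x\<in>{1..T}. \<theta> x) \<le> opt_value n T \<theta>"
    by (rule opt_ge) (use assms in auto)
  moreover have "0 \<le> (\<Sum>x\<in>{1..T}. \<theta> x)"
    using assms by (intro sum_nonneg) auto
  ultimately show "0 \<le> opt_value n T \<theta>" by linarith
  have ne: "{S. S \<subseteq> {1..n} \<and> card S = T} \<noteq> {}"
    using assms(1) by (auto intro!: exI[of _ "{1..T}"])
  have "\<forall>S\<in>{S. S \<subseteq> {1..n} \<and> card S = T}. (\<Sum>x\<in>S. \<theta> x) \<le> real T"
  proof
    fix S assume S: "S \<in> {S. S \<subseteq> {1..n} \<and> card S = T}"
    have "(\<Sum>x\<in>S. \<theta> x) \<le> (\<Sum>x\<in>S. 1)"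
      using S assms by (intro sum_mono) auto
    then show "(\<Sum>x\<in>S. \<theta> x) \<le> real T" using S by simp
  qed
  then show "opt_value n T \<theta> \<le> T"
    unfolding opt_value_def using finite_subsets_T ne by (subst Max_le_iff) auto
qed

lemma regret_bound:
  assumes v: "valid_alg n T P pol" and "T \<le> n" and th: "\<forall>x\<in>{1..n}. \<theta> x \<in> {0..1}"
  shows "norm (regret n T pol w \<theta> z) \<le> 2 * real T"
proof -
  have f: "0 \<le> (\<Sum>t<T. \<theta> (fst (asd_hist pol w \<theta> z T t))) \<and> (\<Sum>t<T. \<theta> (fst (asd_hist pol w \<theta> z T t))) \<le> (\<Sum>t<T. 1)"
  proof
    have "\<forall>t<T. \<theta> (fst (asd_hist pol w \<theta> z T t)) \<in> {0..1}"
      using th choice_valid(1)[OF v] fst_final by metis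
    then show "0 \<le> (\<Sum>t<T. \<theta> (fst (asd_hist pol w \<theta> z T t)))"
      by (auto intro!: sum_nonneg)
    show "(\<Sum>t<T. \<theta> (fst (asd_hist pol w \<theta> z T t))) \<le> (\<Sum>t<T. 1)"
      by (rule sum_mono) (use \<open>\<forall>t<T. _\<close> in auto)
  qed
  show ?thesis using opt_bounds[OF assms(2) th] f unfolding regret_def by auto
qed

lemma avg_regret:
  assumes v: "valid_alg n T P pol" and n: "2 * T \<le> n"
  shows "real T / 4 \<le> (\<Sum>\<theta>\<in>Th n. regret n T pol w \<theta> z) / real (card (Th n))"
proof -
  let ?c = "real (card (Th n))"
  have cpos: "0 < ?c" using finite_Th Th_ne by (simp add: card_gt_0_iff)
  have e1: "(\<Sum>\<theta>\<in>Th n. regret n T pol w \<theta> z)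
     = (\<Sum>\<theta>\<in>Th n. opt_value n T \<theta>) - (\<Sum>t<T. \<Sum>\<theta>\<in>Th n. \<theta> (pol t w (asd_hist pol w \<theta> z t)))"
    unfolding regret_def sum_subtractf by (simp add: sum.swap[of _ "Th n"] fst_final)
  have e2: "(\<Sum>t<T. \<Sum>\<theta>\<in>Th n. \<theta> (pol t w (asd_hist pol w \<theta> z t))) = real T * ?c / 2"
    by (simp add: sum_found[OF v])
  have e3: "(\<Sum>\<theta>\<in>Th n. opt_value n T \<theta>) \<ge> (\<Sum>\<theta>\<in>Th n. \<Sum>i<T. max (\<theta> (2*i+1)) (\<theta> (2*i+2)))"
    by (intro sum_mono opt_lower n)
  have e4: "(\<Sum>\<theta>\<in>Th n. \<Sum>i<T. max (\<theta> (2*i+1)) (\<theta> (2*i+2))) = (\<Sum>i<T. 3 * ?c / 4)"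
    by (subst sum.swap) (intro sum.cong refl sum_max, use n in auto)
  have "real T * ?c / 4 \<le> (\<Sum>\<theta>\<in>Th n. regret n T pol w \<theta> z)"
    using e1 e2 e3 e4 by simp
  then show ?thesis using cpos by (simp add: field_simps)
qed



lemma eval_param[measurable]: "(\<lambda>\<theta>. \<theta> x) \<in> borel_measurable (param_space n)"
proof (cases "x \<in> {1..n}")
  case True then show ?thesis unfolding param_space_def by (rule measurable_component_singleton)
next
  case False
  have "(\<lambda>\<theta>. \<theta> x) \<in> borel_measurable (param_space n) \<longleftrightarrow> (\<lambda>\<theta>. undefined::real) \<in> borel_measurable (param_space n)"
    using False by (intro measurable_cong) (auto simp: param_space_def space_PiM PiE_def extensional_def)
  then show ?thesis by simp
qed

lemma eval_noise[measurable]: "(\<lambda>\<theta>. \<theta> x) \<in> borel_measurable (noise_space n)"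
proof (cases "x \<in> {1..n}")
  case True
  have "(\<lambda>\<theta>. \<theta> x) \<in> measurable (noise_space n) std_normal"
    unfolding noise_space_def using True by (rule measurable_component_singleton)
  then show ?thesis by (simp add: std_normal_def)
next
  case False
  have "(\<lambda>\<theta>. \<theta> x) \<in> borel_measurable (noise_space n) \<longleftrightarrow> (\<lambda>\<theta>. undefined::real) \<in> borel_measurable (noise_space n)"
    using False by (intro measurable_cong) (auto simp: noise_space_def space_PiM PiE_def extensional_def)
  then show ?thesis by simp
qed

lemma upd_meas:
  assumes h: "h \<in> measurable N (hist_space t)"
    and g: "g \<in> measurable N (count_space UNIV \<Otimes>\<^sub>M borel)"
  shows "(\<lambda>\<omega>. (h \<omega>)(t := g \<omega>)) \<in> measurable N (hist_space (Suc t))"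
  unfolding hist_space_def
proof (rule measurable_PiM_single')
  fix i assume i: "i \<in> {..<Suc t}"
  show "(\<lambda>\<omega>. ((h \<omega>)(t := g \<omega>)) i) \<in> measurable N (count_space UNIV \<Otimes>\<^sub>M borel)"
  proof (cases "i = t")
    case True then show ?thesis using g by simp
  next
    case False
    then have "i \<in> {..<t}" using i by simp
    then have "(\<lambda>\<omega>. h \<omega> i) \<in> measurable N (count_space UNIV \<Otimes>\<^sub>M borel)"
      using measurable_compose[OF h[unfolded hist_space_def] measurable_component_singleton] by blast
    then show ?thesis using False by simp
  qed
next
  show "(\<lambda>\<omega>. (h \<omega>)(t := g \<omega>)) \<in> space N \<rightarrow> (\<Pi>\<^sub>E i\<in>{..<Suc t}. space (count_space UNIV \<Otimes>\<^sub>M borel))"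
    using measurable_space[OF h] by (auto simp: hist_space_def space_PiM PiE_def extensional_def space_pair_measure)
qed

definition Om :: "nat \<Rightarrow> real measure \<Rightarrow> ((nat \<Rightarrow> real) \<times> (nat \<Rightarrow> real) \<times> real) measure" where
  "Om n P = param_space n \<Otimes>\<^sub>M (noise_space n \<Otimes>\<^sub>M P)"

lemma om_theta[measurable]: "(\<lambda>\<omega>. fst \<omega> x) \<in> borel_measurable (Om n P)"
  unfolding Om_def by measurable
lemma om_z[measurable]: "(\<lambda>\<omega>. fst (snd \<omega>) x) \<in> borel_measurable (Om n P)"
  unfolding Om_def by measurable
lemma om_w[measurable]: "(\<lambda>\<omega>. snd (snd \<omega>)) \<in> measurable (Om n P) P"
  unfolding Om_def by measurable

lemma hist_meas:
  assumes v: "valid_alg n T P pol"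
  shows "t \<le> T \<Longrightarrow> (\<lambda>\<omega>. asd_hist pol (snd (snd \<omega>)) (fst \<omega>) (fst (snd \<omega>)) t) \<in> measurable (Om n P) (hist_space t)"
proof (induction t)
  case 0
  have "(\<lambda>_. undefined) \<in> space (hist_space 0)" by (simp add: hist_space_def space_PiM)
  then show ?case by simp
next
  case (Suc t)
  let ?h = "\<lambda>\<omega>. asd_hist pol (snd (snd \<omega>)) (fst \<omega>) (fst (snd \<omega>)) t"
  have h: "?h \<in> measurable (Om n P) (hist_space t)" using Suc by simp
  have pm: "(\<lambda>(w, h). pol t w h) \<in> measurable (P \<Otimes>\<^sub>M hist_space t) (count_space UNIV)"
    using v Suc unfolding valid_alg_def by simp
  have x: "(\<lambda>\<omega>. pol t (snd (snd \<omega>)) (?h \<omega>)) \<in> measurable (Om n P) (count_space UNIV)"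
    using measurable_compose[OF measurable_Pair[OF om_w h] pm] by simp
  have y: "(\<lambda>\<omega>. fst \<omega> (pol t (snd (snd \<omega>)) (?h \<omega>)) + fst (snd \<omega>) (pol t (snd (snd \<omega>)) (?h \<omega>))) \<in> borel_measurable (Om n P)"
    by (rule measurable_compose_countable'[where I=UNIV, OF _ x]) auto
  have "(\<lambda>\<omega>. (?h \<omega>)(t := (pol t (snd (snd \<omega>)) (?h \<omega>), fst \<omega> (pol t (snd (snd \<omega>)) (?h \<omega>)) + fst (snd \<omega>) (pol t (snd (snd \<omega>)) (?h \<omega>))))) \<in> measurable (Om n P) (hist_space (Suc t))"
    by (rule upd_meas[OF h measurable_Pair[OF x y]])
  then show ?case unfolding asd_hist.simps Let_def .
qed

lemma regret_meas:
  assumes v: "valid_alg n T P pol"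
  shows "(\<lambda>\<omega>. regret n T pol (snd (snd \<omega>)) (fst \<omega>) (fst (snd \<omega>))) \<in> borel_measurable (Om n P)"
proof -
  have o: "(\<lambda>\<omega>. opt_value n T (fst \<omega>)) \<in> borel_measurable (Om n P)"
    unfolding opt_value_def
    by (rule borel_measurable_Max[OF finite_subsets_T]) (auto intro!: borel_measurable_sum)
  have c: "(\<lambda>\<omega>. fst (asd_hist pol (snd (snd \<omega>)) (fst \<omega>) (fst (snd \<omega>)) T t)) \<in> measurable (Om n P) (count_space UNIV)"
    if "t < T" for t
  proof -
    have "(\<lambda>\<omega>. asd_hist pol (snd (snd \<omega>)) (fst \<omega>) (fst (snd \<omega>)) T t) \<in> measurable (Om n P) (count_space UNIV \<Otimes>\<^sub>M borel)"
      using measurable_compose[OF hist_meas[OF v order.refl, unfolded hist_space_def] measurable_component_singleton] that by blast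
    then show ?thesis by (rule measurable_compose[OF _ measurable_fst])
  qed
  have f: "(\<lambda>\<omega>. \<Sum>t<T. fst \<omega> (fst (asd_hist pol (snd (snd \<omega>)) (fst \<omega>) (fst (snd \<omega>)) T t))) \<in> borel_measurable (Om n P)"
    by (rule borel_measurable_sum, rule measurable_compose_countable'[where I=UNIV, OF _ c]) auto
  show ?thesis unfolding regret_def using o f by measurable
qed



lemma main_bound:
  fixes T n :: nat and P :: "real measure" and pol :: asd_alg
  assumes n2: "2 * T \<le> n" and P: "prob_space P" and v: "valid_alg n T P pol"
  shows "\<exists>Q. prob_space Q \<and> sets Q = sets (param_space n) \<and>
                (AE \<theta> in Q. \<forall>x\<in>{1..n}. \<theta> x \<in> {0..1}) \<and>
                bayes_regret n T Q P pol \<ge> 1/4 * real T"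
proof -
  have Tn: "T \<le> n" using n2 by simp
  define Q where "Q = distr (measure_pmf (pmf_of_set (Th n))) (param_space n) (\<lambda>\<theta>. restrict \<theta> {1..n})"
  have rm: "(\<lambda>\<theta>. restrict \<theta> {1..n}) \<in> measurable (measure_pmf (pmf_of_set (Th n))) (param_space n)"
    by (simp add: param_space_def space_PiM)
  have Qp: "prob_space Q" unfolding Q_def
    by (rule prob_space.prob_space_distr[OF prob_space_measure_pmf rm])
  have Qs: "sets Q = sets (param_space n)" unfolding Q_def by simp
  have setTh: "set_pmf (pmf_of_set (Th n)) = Th n"
    using Th_ne finite_Th by (rule set_pmf_of_set)
  have resTh: "restrict \<theta> {1..n} = \<theta>" if "\<theta> \<in> Th n" for \<theta>
    using that unfolding Th_def by (rule PiE_restrict)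
  have ms: "{\<theta> \<in> space (param_space n). \<forall>x\<in>{1..n}. \<theta> x \<in> {0..1}} \<in> sets (param_space n)"
    by measurable
  have AEQ: "AE \<theta> in Q. \<forall>x\<in>{1..n}. \<theta> x \<in> {0..1}"
    unfolding Q_def AE_distr_iff[OF rm ms]
    unfolding AE_measure_pmf_iff setTh using resTh Th_val by fastforce
  have Np: "prob_space (noise_space n)"
    unfolding noise_space_def std_normal_def by (intro prob_space_PiM prob_space_normal_density) simp
  define M where "M = noise_space n \<Otimes>\<^sub>M P"
  have Mp: "prob_space M" unfolding M_def by (rule prob_space_pair[OF Np P])
  interpret QM: pair_prob_space Q M
    using Qp Mp by (simp add: pair_prob_space_def pair_sigma_finite_def prob_space_imp_sigma_finite)
  define F where "F \<theta> y = (case y of (z, w) \<Rightarrow> regret n T pol w \<theta> z)" for \<theta> y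
  have B: "bayes_regret n T Q P pol = integral\<^sup>L (Q \<Otimes>\<^sub>M M) (case_prod F)"
    unfolding bayes_regret_def F_def M_def ..
  have meas0: "case_prod F \<in> borel_measurable (param_space n \<Otimes>\<^sub>M M)"
  proof -
    have "(\<lambda>\<omega>. regret n T pol (snd (snd \<omega>)) (fst \<omega>) (fst (snd \<omega>))) \<in> borel_measurable (param_space n \<Otimes>\<^sub>M M)"
      using regret_meas[OF v] unfolding Om_def M_def .
    then show ?thesis by (rule measurable_cong[THEN iffD1, rotated]) (auto simp: F_def split: prod.splits)
  qed
  have meas: "case_prod F \<in> borel_measurable (Q \<Otimes>\<^sub>M M)"
    using meas0 by (subst measurable_cong_sets[OF sets_pair_measure_cong[OF Qs refl] refl])
  have int: "integrable (Q \<Otimes>\<^sub>M M) (case_prod F)"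
  proof (rule QM.P.integrable_const_bound[where B="2 * real T", OF _ meas])
    show "AE x in Q \<Otimes>\<^sub>M M. norm (case_prod F x) \<le> 2 * real T"
    proof (rule QM.AE_pair_measure)
      show "{x \<in> space (Q \<Otimes>\<^sub>M M). norm (case_prod F x) \<le> 2 * real T} \<in> sets (Q \<Otimes>\<^sub>M M)"
        using meas by measurable
      show "AE x in Q. AE y in M. norm (case_prod F (x, y)) \<le> 2 * real T"
        using AEQ
      proof eventually_elim
        case (elim \<theta>)
        show ?case
        proof (rule AE_I2)
          fix y
          show "norm (case_prod F (\<theta>, y)) \<le> 2 * real T"
            using regret_bound[OF v Tn elim, of "snd y" "fst y"] by (cases y) (simp add: F_def)
        qed
      qed
    qed
  qed
  have "1/4 * real T \<le> (\<integral>y. (\<integral>\<theta>. F \<theta> y \<partial>Q) \<partial>M)"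
  proof (rule QM.M2.integral_ge_const[OF QM.integrable_snd[OF int]])
    show "AE y in M. 1/4 * real T \<le> (\<integral>\<theta>. F \<theta> y \<partial>Q)"
    proof (rule AE_I2)
      fix y assume y: "y \<in> space M"
      have my: "(\<lambda>\<theta>. F \<theta> y) \<in> borel_measurable (param_space n)"
        using measurable_compose[OF measurable_Pair2'[OF y] meas0] by simp
      have "(\<integral>\<theta>. F \<theta> y \<partial>Q) = (\<Sum>\<theta>\<in>Th n. F (restrict \<theta> {1..n}) y) / real (card (Th n))"
        unfolding Q_def integral_distr[OF rm my] by (rule integral_pmf_of_set[OF Th_ne finite_Th])
      also have "\<dots> = (\<Sum>\<theta>\<in>Th n. F \<theta> y) / real (card (Th n))"
        using resTh by (intro arg_cong[where f="\<lambda>s. s / _"] sum.cong) auto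
      also have "\<dots> \<ge> real T / 4"
        using avg_regret[OF v n2, of "snd y" "fst y"] by (cases y) (simp add: F_def)
      finally show "1/4 * real T \<le> (\<integral>\<theta>. F \<theta> y \<partial>Q)" by simp
    qed
  qed
  also have "\<dots> = bayes_regret n T Q P pol" unfolding B by (rule QM.integral_snd[OF int])
  finally show ?thesis using Qp Qs AEQ by blast
qed


theorem proposition1:
  shows "\<exists>c>0. \<forall>T::nat. \<forall>(P :: real measure) (pol :: asd_alg).
           T \<ge> 2 \<longrightarrow> prob_space P \<longrightarrow> valid_alg (T^2) T P pol \<longrightarrow>
           (\<exists>Q. prob_space Q \<and> sets Q = sets (param_space (T^2)) \<and>
                (AE \<theta> in Q. \<forall>x\<in>{1..T^2}. \<theta> x \<in> {0..1}) \<and>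
                bayes_regret (T^2) T Q P pol \<ge> c * real T)"
proof (intro exI[of _ "1/4::real"] conjI allI impI)
  fix T :: nat and P :: "real measure" and pol :: asd_alg
  assume T: "T \<ge> 2" and P: "prob_space P" and v: "valid_alg (T^2) T P pol"
  have "2 * T \<le> T^2" using T by (simp add: power2_eq_square)
  then show "\<exists>Q. prob_space Q \<and> sets Q = sets (param_space (T^2)) \<and>
                (AE \<theta> in Q. \<forall>x\<in>{1..T^2}. \<theta> x \<in> {0..1}) \<and>
                bayes_regret (T^2) T Q P pol \<ge> 1/4 * real T"
    by (rule main_bound[OF _ P v])
qed simp

end
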